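(* For all integers $0\le k\le l$, the ideal $I_{l,k}=(h_{l,k,0},h_{l,k,1},\dots,h_{l,k,k})$ of $\mathbb{Z}[q,q^{-1}]$ is principal, generated by $g_{l,k}=\mathrm{GCD}(h_{l,k,0},\dots,h_{l,k,k})$.
   Context: In $\mathbb{Z}[q,q^{-1}]$ set $\{i\}_q=q^i-1$, $\{i\}_{q,n}=\{i\}_q\{i-1\}_q\cdots\{i-n+1\}_q$ (equal to $1$ for $n=0$), $\{n\}_q!=\{n\}_{q,n}$. For $0\le i\le k\le l$ set $h_{l,k,i}=\{l-i\}_{q,k-i}\,\{i\}_q!$. $(a_1,\dots,a_r)$ denotes the ideal generated by $a_1,\dots,a_r$; GCD is a greatest common divisor in the UFD $\mathbb{Z}[q,q^{-1}]$ (defined up to units $\pm q^j$). *)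

theory Defs
  imports "HOL-Computational_Algebra.Computational_Algebra"
          "HOL-Computational_Algebra.Polynomial_FPS"
          "HOL-Computational_Algebra.Formal_Laurent_Series"
begin

definition qbr :: "nat \<Rightarrow> int poly" where
  "qbr i = monom 1 i - 1"

definition qfall :: "nat \<Rightarrow> nat \<Rightarrow> int poly" where
  "qfall i n = (\<Prod>j<n. qbr (i - j))"

definition qfact :: "nat \<Rightarrow> int poly" where
  "qfact n = qfall n n"

definition h :: "nat \<Rightarrow> nat \<Rightarrow> nat \<Rightarrow> int poly" where
  "h l k i = qfall (l - i) (k - i) * qfact i"

text \<open>The ring Z[q,q^{-1}] realised inside the Laurent series over int:
  embedding of integer polynomials and the set of Laurent polynomials.\<close>
definition lp :: "int poly \<Rightarrow> int fls" where
  "lp p = fps_to_fls (fps_of_poly p)"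

definition laurent_polys :: "int fls set" where
  "laurent_polys = {fls_shift n (lp p) | n p. True}"

definition laurent_ideal :: "(nat \<Rightarrow> int fls) \<Rightarrow> nat \<Rightarrow> int fls set" where
  "laurent_ideal f k = {\<Sum>i\<le>k. c i * f i | c. \<forall>i\<le>k. c i \<in> laurent_polys}"

end

theory Submission
  imports Defs
begin


lemma lp_mult: "lp (p * q) = lp p * lp q"
  by (simp add: lp_def fps_of_poly_mult fls_times_fps_to_fls)
lemma lp_add: "lp (p + q) = lp p + lp q"
  by (simp add: lp_def fps_of_poly_add)
lemma lp_sum: "lp (sum f A) = (\<Sum>x\<in>A. lp (f x))"
  by (induction A rule: infinite_finite_induct) (auto simp: lp_add, simp_all add: lp_def)

lemma lp_monom: "lp (monom 1 j) = fls_shift (- int j) 1"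
  by (simp add: lp_def fps_of_poly_monom fps_to_fls_power fls_X_power_conv_shift_1)

lemma lp_in: "lp p \<in> laurent_polys"
  unfolding laurent_polys_def by (rule CollectI, rule exI[of _ 0], auto)

lemma lp_shift_normal: assumes "n \<le> N"
  shows "fls_shift n (lp p) = fls_shift N (lp (p * monom 1 (nat (N - n))))"
proof -
  have "lp (p * monom 1 (nat (N - n))) = fls_shift (- (N-n)) (lp p)"
    using assms by (simp add: lp_mult lp_monom fls_shifted_times_simps)
  thus ?thesis by simp
qed

lemma lpolys_mult: "a \<in> laurent_polys \<Longrightarrow> b \<in> laurent_polys \<Longrightarrow> a * b \<in> laurent_polys"
  unfolding laurent_polys_def
  by (auto simp: fls_times_both_shifted_simp lp_mult[symmetric]) blast

lemma lpolys_add: "a \<in> laurent_polys \<Longrightarrow> b \<in> laurent_polys \<Longrightarrow> a + b \<in> laurent_polys"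
proof -
  assume "a \<in> laurent_polys" "b \<in> laurent_polys"
  then obtain n p m r where a: "a = fls_shift n (lp p)" and b: "b = fls_shift m (lp r)"
    unfolding laurent_polys_def by auto
  define N where "N = max n m"
  have "a + b = fls_shift N (lp (p * monom 1 (nat (N - n)) + r * monom 1 (nat (N - m))))"
    unfolding a b lp_add fls_shift_plus
    by (subst lp_shift_normal[of n N], simp add: N_def, subst lp_shift_normal[of m N], simp add: N_def) simp
  thus ?thesis unfolding laurent_polys_def by blast
qed

lemma lpolys_sum: "(\<And>i. i \<in> A \<Longrightarrow> f i \<in> laurent_polys) \<Longrightarrow> sum f A \<in> laurent_polys"
proof (induction A rule: infinite_finite_induct)
  case (infinite A) then show ?case using lp_in[of 0] by (simp add: lp_def)
next
  case empty then show ?case using lp_in[of 0] by (simp add: lp_def)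
next
  case (insert x F) then show ?case by (simp add: lpolys_add)
qed

lemma transfer:
  fixes f :: "nat \<Rightarrow> int poly" and g :: "int poly" and k :: nat
  assumes dv: "\<And>i. i \<le> k \<Longrightarrow> g dvd f i"
    and mem: "\<exists>c. g = (\<Sum>i\<le>k. c i * f i)"
  shows "laurent_ideal (\<lambda>i. lp (f i)) k = laurent_ideal (\<lambda>_. lp g) 0"
proof
  show "laurent_ideal (\<lambda>i. lp (f i)) k \<subseteq> laurent_ideal (\<lambda>_. lp g) 0"
  proof
    fix x assume "x \<in> laurent_ideal (\<lambda>i. lp (f i)) k"
    then obtain c where x: "x = (\<Sum>i\<le>k. c i * lp (f i))" and c: "\<forall>i\<le>k. c i \<in> laurent_polys"
      unfolding laurent_ideal_def by auto
    obtain w where w: "\<And>i. i \<le> k \<Longrightarrow> f i = g * w i"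
      using dv unfolding dvd_def by metis
    have "x = (\<Sum>i\<le>k. c i * lp (w i)) * lp g"
      unfolding x sum_distrib_right by (rule sum.cong) (auto simp: w lp_mult)
    moreover have "(\<Sum>i\<le>k. c i * lp (w i)) \<in> laurent_polys"
      using c by (auto intro!: lpolys_sum lpolys_mult lp_in)
    ultimately show "x \<in> laurent_ideal (\<lambda>_. lp g) 0"
      unfolding laurent_ideal_def by (auto intro!: exI[of _ "\<lambda>_. (\<Sum>i\<le>k. c i * lp (w i))"])
  qed
next
  show "laurent_ideal (\<lambda>_. lp g) 0 \<subseteq> laurent_ideal (\<lambda>i. lp (f i)) k"
  proof
    fix x assume "x \<in> laurent_ideal (\<lambda>_. lp g) 0"
    then obtain a where x: "x = a * lp g" and a: "a \<in> laurent_polys"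
      unfolding laurent_ideal_def by auto
    obtain c where c: "g = (\<Sum>i\<le>k. c i * f i)" using mem by blast
    have "x = (\<Sum>i\<le>k. (a * lp (c i)) * lp (f i))"
      unfolding x c lp_sum sum_distrib_left by (rule sum.cong) (auto simp: lp_mult mult.assoc)
    moreover have "\<forall>i\<le>k. a * lp (c i) \<in> laurent_polys" using a by (auto intro: lpolys_mult lp_in)
    ultimately show "x \<in> laurent_ideal (\<lambda>i. lp (f i)) k"
      unfolding laurent_ideal_def by (intro CollectI exI[of _ "\<lambda>i. a * lp (c i)"]) auto
  qed
qed


lemma coeff_qbr_n: "n > 0 \<Longrightarrow> coeff (qbr n) n = 1"
  unfolding qbr_def apply (simp only: coeff_diff coeff_monom) apply simp done
lemma degree_qbr: assumes "n > 0" shows "degree (qbr n) = n"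
proof (rule antisym)
  have "degree (monom (1::int) n - 1) \<le> max (degree (monom (1::int) n)) (degree (1::int poly))"
    by (rule degree_diff_le_max)
  also have "\<dots> \<le> n" by (simp only: degree_monom_eq degree_1 max_def) simp
  finally show "degree (qbr n) \<le> n" unfolding qbr_def .
  show "n \<le> degree (qbr n)" by (rule le_degree) (simp add: coeff_qbr_n assms)
qed
lemma lead_coeff_qbr: "n > 0 \<Longrightarrow> lead_coeff (qbr n) = 1"
  by (simp only: degree_qbr coeff_qbr_n)
lemma qbr_nz: "n > 0 \<Longrightarrow> qbr n \<noteq> 0"
  by (metis lead_coeff_qbr leading_coeff_0_iff zero_neq_one)

definition cp :: "int poly \<Rightarrow> complex poly" where "cp p = map_poly of_int p"

lemma coeff_cp: "coeff (cp p) n = of_int (coeff p n)"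
  by (simp add: cp_def coeff_map_poly)
lemma cp_mult: "cp (p * q) = cp p * cp q"
  by (rule poly_eqI) (simp add: coeff_cp coeff_mult)
lemma cp_add: "cp (p + q) = cp p + cp q"
  by (rule poly_eqI) (simp add: coeff_cp)
lemma cp_diff: "cp (p - q) = cp p - cp q"
  by (rule poly_eqI) (simp add: coeff_cp)
lemma cp_1: "cp 1 = 1"
  by (simp add: cp_def)
lemma cp_0: "cp 0 = 0"
  by (simp add: cp_def)
lemma cp_eq_0: "cp p = 0 \<longleftrightarrow> p = 0"
  by (metis coeff_cp of_int_eq_0_iff poly_eqI coeff_0 cp_0)
lemma cp_prod: "cp (prod f A) = (\<Prod>x\<in>A. cp (f x))"
  by (induction A rule: infinite_finite_induct) (simp_all add: cp_1 cp_mult)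
lemma degree_cp: "degree (cp p) = degree p"
  by (simp add: cp_def degree_map_poly)
lemma cp_smult: "cp (smult c p) = smult (of_int c) (cp p)"
  by (rule poly_eqI) (simp add: coeff_cp)
lemma cp_qbr: "cp (qbr n) = monom 1 n - 1"
  by (rule poly_eqI) (simp add: coeff_cp qbr_def coeff_monom)

lemma cdvd:
  fixes p q :: "complex poly"
  assumes "p \<noteq> 0" "q \<noteq> 0" "\<And>a. order a p \<le> order a q"
  shows "p dvd q"
  using assms
proof (induction "degree p" arbitrary: p q rule: less_induct)
  case less
  show ?case
  proof (cases "degree p = 0")
    case True
    then have "is_unit p" using less.prems(1) by (simp add: is_unit_iff_degree)
    then show ?thesis by (rule unit_imp_dvd)
  next
    case False
    then have "\<not> constant (poly p)" by (simp add: constant_degree)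
    then obtain a where a: "poly p a = 0"
      using fundamental_theorem_of_algebra by blast
    then obtain p1 where p1: "p = [:-a,1:] * p1" using poly_eq_0_iff_dvd by blast
    have "order a p \<noteq> 0" using a less.prems(1) order_root by blast
    then have "order a q \<noteq> 0" using less.prems(3)[of a] by linarith
    then have "poly q a = 0" using order_root by blast
    then obtain q1 where q1: "q = [:-a,1:] * q1" using poly_eq_0_iff_dvd by blast
    have p1nz: "p1 \<noteq> 0" using p1 less.prems(1) by auto
    have q1nz: "q1 \<noteq> 0" using q1 less.prems(2) by auto
    have "degree p = degree [:-a,1::complex:] + degree p1" unfolding p1
      by (rule degree_mult_eq) (use p1nz in auto)
    then have dg: "degree p1 < degree p" by simp
    have "order b p1 \<le> order b q1" for b
    proof -
      have e1: "order b p = order b [:-a,1:] + order b p1"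
        unfolding p1 using less.prems(1)[unfolded p1] by (rule order_mult)
      have e2: "order b q = order b [:-a,1:] + order b q1"
        unfolding q1 using less.prems(2)[unfolded q1] by (rule order_mult)
      show ?thesis using less.prems(3)[of b] unfolding e1 e2 by simp
    qed
    then have "p1 dvd q1" using less.hyps[OF dg p1nz q1nz] by blast
    then show ?thesis unfolding p1 q1 by (rule mult_dvd_mono[OF dvd_refl])
  qed
qed

lemma zdvd:
  fixes p r :: "int poly"
  assumes u: "is_unit (lead_coeff p)" and r: "r \<noteq> 0"
    and o: "\<And>a. order a (cp p) \<le> order a (cp r)"
  shows "p dvd r"
proof -
  have p0: "p \<noteq> 0" using u by auto
  obtain s t where st: "pseudo_divmod r p = (s, t)" by (cases "pseudo_divmod r p") auto
  define c where "c = lead_coeff p ^ (Suc (degree r) - degree p)"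
  have eq: "smult c r = p * s + t" and tt: "t = 0 \<or> degree t < degree p"
    using pseudo_divmod[OF p0 st] by (simp_all add: c_def)
  have cu: "is_unit c" using u unfolding c_def by (simp add: power_abs)
  have "cp p dvd cp r" by (rule cdvd) (use p0 r o in \<open>simp_all add: cp_eq_0\<close>)
  then have "cp p dvd cp t"
  proof -
    have "cp t = smult (of_int c) (cp r) - cp p * cp s"
      using arg_cong[OF eq, of cp] by (simp add: cp_smult cp_add cp_mult)
    thus ?thesis using \<open>cp p dvd cp r\<close> by (simp add: dvd_diff dvd_smult)
  qed
  have "t = 0"
  proof (rule ccontr)
    assume "t \<noteq> 0"
    then have "degree (cp p) \<le> degree (cp t)"
      using \<open>cp p dvd cp t\<close> by (intro dvd_imp_degree_le) (simp_all add: cp_eq_0)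
    then show False using tt \<open>t \<noteq> 0\<close> by (simp add: degree_cp)
  qed
  then have "smult c r = p * s" using eq by simp
  moreover have "\<bar>c\<bar> = 1" using cu by simp
  then have "c * c = 1" by (metis abs_mult_self_eq mult_1)
  ultimately have "r = p * smult c s"
    by (metis mult_smult_right smult_1_left smult_smult)
  then show ?thesis by (rule dvdI)
qed

definition ordc :: "complex \<Rightarrow> int poly \<Rightarrow> nat" where "ordc a p = order a (cp p)"

lemma ordc_mult: "p \<noteq> 0 \<Longrightarrow> q \<noteq> 0 \<Longrightarrow> ordc a (p * q) = ordc a p + ordc a q"
  unfolding ordc_def cp_mult by (rule order_mult) (simp add: cp_eq_0)

lemma ordc_dvd: "q \<noteq> 0 \<Longrightarrow> p dvd q \<Longrightarrow> ordc a p \<le> ordc a q"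
  unfolding ordc_def
  by (rule dvd_imp_order_le) (auto simp: cp_eq_0 cp_mult elim!: dvdE)

lemma ordc_prod: "finite A \<Longrightarrow> (\<And>x. x \<in> A \<Longrightarrow> f x \<noteq> 0) \<Longrightarrow> ordc a (prod f A) = (\<Sum>x\<in>A. ordc a (f x))"
proof (induction A rule: finite_induct)
  case empty then show ?case by (simp add: ordc_def cp_1)
next
  case (insert x F) then show ?case by (simp add: ordc_mult)
qed

lemma ordc_qbr: assumes "n > 0" shows "ordc a (qbr n) = (if a ^ n = 1 then 1 else 0)"
proof (cases "a ^ n = 1")
  case False
  then have "poly (cp (qbr n)) a \<noteq> 0" by (simp add: cp_qbr poly_monom)
  then show ?thesis using False by (simp add: ordc_def order_0I)
next
  case True
  have nz: "cp (qbr n) \<noteq> 0" using qbr_nz[OF assms] by (simp add: cp_eq_0)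
  have r: "poly (cp (qbr n)) a = 0" using True by (simp add: cp_qbr poly_monom)
  have a0: "a \<noteq> 0" using True assms by (auto simp: power_0_left)
  have "poly (pderiv (cp (qbr n))) a \<noteq> 0"
    using a0 assms by (simp add: cp_qbr pderiv_diff pderiv_monom poly_monom)
  then have "order a (pderiv (cp (qbr n))) = 0" by (rule order_0I)
  then show ?thesis using order_pderiv[OF nz r] True by (simp add: ordc_def)
qed



lemma monom_X: "(monom 1 n :: 'a::comm_ring_1 poly) = [:0,1:] ^ n"
  by (simp add: monom_altdef)

lemma qbr_X: "qbr n = [:0,1:] ^ n - 1"
  by (simp add: qbr_def monom_X)

lemma qbr_add: "qbr (a + b) = monom 1 a * qbr b + qbr a"
  unfolding qbr_X monom_X by (simp add: power_add algebra_simps)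


lemma qbr_dvd: assumes "a dvd b" shows "qbr a dvd qbr b"
proof -
  obtain c where b: "b = a * c" using assms by blast
  have "qbr b = (([:0,1:]^a)^c - 1)" unfolding qbr_X b by (simp only: power_mult)
  also have "\<dots> = ([:0,1:]^a - 1) * (\<Sum>i<c. ([:0,1:]^a)^i)" by (rule power_diff_1_eq)
  finally show ?thesis unfolding qbr_X by (rule dvdI)
qed

lemma ring_aux: "(x::'a::comm_ring_1) = s * y + t * z \<Longrightarrow> A = M * z + y \<Longrightarrow> x = s * A + (t - s * M) * z"
  by (simp add: algebra_simps)

lemma qbr_euclid: "\<exists>s t. qbr (gcd a b) = s * qbr a + t * qbr b"
proof (induction "a + b" arbitrary: a b rule: less_induct)
  case less
  show ?case
  proof (cases "a = 0 \<or> b = 0")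
    case True
    then show ?thesis
    proof
      assume "a = 0" then show ?thesis by (intro exI[of _ 0] exI[of _ 1]) simp
    next
      assume "b = 0" then show ?thesis by (intro exI[of _ 1] exI[of _ 0]) simp
    qed
  next
    case False
    show ?thesis
    proof (cases "b \<le> a")
      case True
      obtain s t where st: "qbr (gcd (a-b) b) = s * qbr (a-b) + t * qbr b"
        using less(1)[of "a-b" b] False True by auto
      have g: "gcd (a-b) b = gcd a b" using True by (simp add: gcd_diff1_nat)
      have qa: "qbr a = monom 1 (a-b) * qbr b + qbr (a-b)"
        using qbr_add[of "a-b" b] True by (metis le_add_diff_inverse2)
      have "qbr (gcd a b) = s * qbr a + (t - s * monom 1 (a-b)) * qbr b"
        by (rule ring_aux[OF st[unfolded g] qa])
      then show ?thesis by blast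
    next
      case nle: False
      obtain s t where st: "qbr (gcd (b-a) a) = s * qbr (b-a) + t * qbr a"
        using less(1)[of "b-a" a] False nle by auto
      have g: "gcd (b-a) a = gcd a b" using nle by (metis gcd.commute gcd_diff1_nat less_imp_le not_le)
      have qa: "qbr b = monom 1 (b-a) * qbr a + qbr (b-a)"
        using qbr_add[of "b-a" a] nle by (metis le_add_diff_inverse2 nat_le_linear)
      have "qbr (gcd a b) = s * qbr b + (t - s * monom 1 (b-a)) * qbr a"
        by (rule ring_aux[OF st[unfolded g] qa])
      then show ?thesis by (metis add.commute)
    qed
  qed
qed



lemma qfact_Suc: "qfact (Suc j) = qbr (Suc j) * qfact j"
  unfolding qfact_def qfall_def by (subst prod.lessThan_Suc_shift) simp

lemma qfact_0: "qfact 0 = 1" by (simp add: qfact_def qfall_def)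

lemma qfact_prod: "qfact j = (\<Prod>t\<in>{1..j}. qbr t)"
  by (induction j) (simp_all add: qfact_0 qfact_Suc prod.cl_ivl_Suc mult.commute)

lemma qfact_nz: "qfact j \<noteq> 0"
  by (induction j) (simp_all add: qfact_0 qfact_Suc qbr_nz)

lemma lc_qfact: "lead_coeff (qfact j) = 1"
  by (induction j) (simp_all add: qfact_0 qfact_Suc lead_coeff_mult lead_coeff_qbr)

lemma qbr_dvd_qfact: "1 \<le> t \<Longrightarrow> t \<le> j \<Longrightarrow> qbr t dvd qfact j"
proof (induction j)
  case 0 then show ?case by simp
next
  case (Suc j)
  show ?case
  proof (cases "t = Suc j")
    case True then show ?thesis by (simp add: qfact_Suc)
  next
    case False then have "qbr t dvd qfact j" using Suc by simp
    then show ?thesis by (simp add: qfact_Suc)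
  qed
qed

lemma sum_if_card: "finite A \<Longrightarrow> (\<Sum>x\<in>A. if P x then 1 else 0 :: nat) = card {x\<in>A. P x}"
  by (simp add: sum.If_cases Int_def conj_commute)

lemma ordc_qfact: "ordc a (qfact j) = card {t\<in>{1..j}. a ^ t = 1}"
proof -
  have "ordc a (qfact j) = (\<Sum>t\<in>{1..j}. ordc a (qbr t))"
    unfolding qfact_prod by (rule ordc_prod) (auto simp: qbr_nz)
  also have "\<dots> = (\<Sum>t\<in>{1..j}. if a ^ t = 1 then 1 else 0)"
    by (rule sum.cong) (auto simp: ordc_qbr)
  finally show ?thesis by (simp add: sum_if_card)
qed

lemma h_Suc: assumes "i \<le> k" "Suc k \<le> l" shows "h l (Suc k) i = qbr (l - k) * h l k i"
proof -
  have "Suc k - i = Suc (k - i)" using assms by simp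
  then have "qfall (l - i) (Suc k - i) = qfall (l - i) (k - i) * qbr (l - i - (k - i))"
    unfolding qfall_def by simp
  also have "l - i - (k - i) = l - k" using assms by simp
  finally show ?thesis unfolding h_def by (simp add: mult_ac)
qed

lemma h_diag: "h l k k = qfact k"
  by (simp add: h_def qfall_def)

lemma lc_unit_dvd: assumes "p dvd q" "lead_coeff q = 1" shows "is_unit (lead_coeff (p::int poly))"
proof -
  obtain k where "q = p * k" using assms(1) by blast
  then have "1 = lead_coeff p * lead_coeff k" using assms(2) by (simp add: lead_coeff_mult)
  then show ?thesis by (rule dvdI)
qed

lemma pow_gcd_1: assumes "(a::complex) ^ m = 1" "a ^ n = 1" shows "a ^ gcd m n = 1"
proof (cases "m = 0")
  case True then show ?thesis using assms by simp
next
  case False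
  then obtain x y where xy: "m * x = n * y + gcd m n" using bezout_nat by blast
  have "1 = a ^ (m * x)" using assms by (simp add: power_mult)
  also have "\<dots> = a ^ (n * y) * a ^ gcd m n" by (simp add: xy power_add)
  also have "\<dots> = a ^ gcd m n" using assms by (simp add: power_mult)
  finally show ?thesis by simp
qed

lemma pow_dvd_1: assumes "(a::complex) ^ m = 1" "m dvd n" shows "a ^ n = 1"
  using assms by (auto elim!: dvdE simp: power_mult)

definition D :: "nat \<Rightarrow> nat \<Rightarrow> int poly" where "D l j = gcd (qbr (l + 1 - j)) (qfact j)"
definition G :: "nat \<Rightarrow> nat \<Rightarrow> int poly" where "G l k = (\<Prod>j\<in>{1..k}. D l j)"

lemma D_dvd1: "D l j dvd qbr (l + 1 - j)" by (simp add: D_def)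
lemma D_dvd2: "D l j dvd qfact j" by (simp add: D_def)
lemma D_nz: "D l j \<noteq> 0" by (simp add: D_def qfact_nz)
lemma lc_D: "is_unit (lead_coeff (D l j))" by (rule lc_unit_dvd[OF D_dvd2 lc_qfact])

lemma ordc_D: assumes "1 \<le> j" "j \<le> l"
  shows "ordc a (D l j) = (if a ^ (l + 1 - j) = 1 \<and> (\<exists>t\<in>{1..j}. a ^ t = 1) then 1 else 0)"
proof -
  have n0: "l + 1 - j > 0" using assms by simp
  have up1: "ordc a (D l j) \<le> ordc a (qbr (l + 1 - j))"
    by (rule ordc_dvd[OF qbr_nz[OF n0] D_dvd1])
  have up2: "ordc a (D l j) \<le> ordc a (qfact j)"
    by (rule ordc_dvd[OF qfact_nz D_dvd2])
  show ?thesis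
  proof (cases "a ^ (l + 1 - j) = 1 \<and> (\<exists>t\<in>{1..j}. a ^ t = 1)")
    case True
    then obtain t where t: "t \<in> {1..j}" "a ^ t = 1" by blast
    define e where "e = gcd (l + 1 - j) t"
    have e0: "e > 0" using t by (simp add: e_def)
    have "qbr e dvd qbr (l + 1 - j)" by (rule qbr_dvd) (simp add: e_def)
    moreover have "qbr e dvd qfact j"
      by (rule dvd_trans[OF qbr_dvd[of e t] qbr_dvd_qfact[of t j]]) (use t in \<open>auto simp: e_def\<close>)
    ultimately have "qbr e dvd D l j" by (simp add: D_def)
    then have "ordc a (qbr e) \<le> ordc a (D l j)" by (rule ordc_dvd[OF D_nz])
    moreover have "a ^ e = 1" using True t by (simp add: e_def pow_gcd_1)
    ultimately have "1 \<le> ordc a (D l j)" by (simp add: ordc_qbr[OF e0])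
    moreover have "ordc a (qbr (l + 1 - j)) \<le> 1" unfolding ordc_qbr[OF n0] by simp
    then have "ordc a (D l j) \<le> 1" using up1 by linarith
    ultimately show ?thesis using True by simp
  next
    case False
    show ?thesis
    proof (cases "a ^ (l + 1 - j) = 1")
      case False
      assume na: "a ^ (l + 1 - j) \<noteq> 1"
      then have "ordc a (qbr (l + 1 - j)) = 0" unfolding ordc_qbr[OF n0] by simp
      then show ?thesis using up1 na by simp
    next
      case True
      with False have "\<not> (\<exists>t\<in>{1..j}. a ^ t = 1)" by blast
      then have "{t\<in>{1..j}. a ^ t = 1} = {}" by blast
      then have "ordc a (qfact j) = 0" unfolding ordc_qfact by (simp only: card.empty)
      then show ?thesis using up2 False by simp
    qed
  qed
qed

lemma G_Suc: "G l (Suc k) = G l k * D l (Suc k)"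
  by (simp add: G_def prod.cl_ivl_Suc)

lemma G_nz: "G l k \<noteq> 0" by (simp add: G_def D_nz)

lemma lc_G: "is_unit (lead_coeff (G l k))"
proof (rule lc_unit_dvd)
  show "G l k dvd (\<Prod>j\<in>{1..k}. qfact j)" unfolding G_def by (rule prod_dvd_prod) (rule D_dvd2)
  show "lead_coeff (\<Prod>j\<in>{1..k}. qfact j) = 1" by (simp add: lead_coeff_prod lc_qfact)
qed

lemma ordc_G: assumes "k \<le> l"
  shows "ordc a (G l k) = card {j\<in>{1..k}. a ^ (l + 1 - j) = 1 \<and> (\<exists>t\<in>{1..j}. a ^ t = 1)}"
proof -
  have "ordc a (G l k) = (\<Sum>j\<in>{1..k}. ordc a (D l j))"
    unfolding G_def by (rule ordc_prod) (auto simp: D_nz)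
  also have "\<dots> = (\<Sum>j\<in>{1..k}. if a ^ (l + 1 - j) = 1 \<and> (\<exists>t\<in>{1..j}. a ^ t = 1) then 1 else 0)"
    by (rule sum.cong) (use assms in \<open>auto simp: ordc_D\<close>)
  finally show ?thesis by (simp add: sum_if_card)
qed



lemma pow_split: "(a::complex) ^ x = 1 \<Longrightarrow> a ^ y = 1 \<Longrightarrow> x \<le> y \<Longrightarrow> a ^ (y - x) = 1"
proof -
  assume h: "a ^ x = 1" "a ^ y = 1" "x \<le> y"
  have "a ^ y = a ^ x * a ^ (y - x)" using h(3) by (simp add: power_add[symmetric])
  then show ?thesis using h by simp
qed

lemma count_c: assumes "K \<le> l"
  shows "card {j\<in>{1..K}. a ^ (l + 1 - j) = 1 \<and> (\<exists>t\<in>{1..j}. (a::complex) ^ t = 1)}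
         \<le> card {t\<in>{1..K}. a ^ t = 1}" (is "card ?S \<le> card ?T")
proof (cases "?S = {}")
  case True then show ?thesis unfolding True by simp
next
  case False
  have fS: "finite ?S" by simp
  define j0 where "j0 = Min ?S"
  have j0S: "j0 \<in> ?S" using Min_in[OF fS False] by (simp add: j0_def)
  then obtain t0 where t0: "t0 \<in> {1..j0}" "a ^ t0 = 1" by blast
  have le: "j0 \<le> j" if "j \<in> ?S" for j using Min_le[OF fS that] by (simp add: j0_def)
  define f where "f j = j - j0 + t0" for j
  have "inj_on f ?S"
  proof (rule inj_onI)
    fix x y assume "x \<in> ?S" "y \<in> ?S" "f x = f y"
    then show "x = y" using le[of x] le[of y] unfolding f_def by linarith
  qed
  moreover have "f ` ?S \<subseteq> ?T"
  proof
    fix x assume "x \<in> f ` ?S"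
    then obtain j where jS: "j \<in> ?S" and x: "x = f j" by blast
    have j0j: "j0 \<le> j" using le[OF jS] .
    have "l + 1 - j \<le> l + 1 - j0" using j0j by simp
    moreover have "l + 1 - j0 - (l + 1 - j) = j - j0" using jS j0j assms by auto
    ultimately have "a ^ (j - j0) = 1" using pow_split[of a "l + 1 - j" "l + 1 - j0"] jS j0S by auto
    then have "a ^ x = 1" using t0 by (simp add: x f_def power_add)
    moreover have "1 \<le> x" "x \<le> K" using t0 jS j0j by (auto simp: x f_def)
    ultimately show "x \<in> ?T" by simp
  qed
  ultimately show ?thesis by (rule card_inj_on_le) simp
qed

lemma count_d: assumes "K \<le> l"
  shows "card {j\<in>{1..K}. (a::complex) ^ (gcd j (l + 1 - K)) = 1}
         \<le> card {j\<in>{1..K}. a ^ (l + 1 - j) = 1 \<and> (\<exists>t\<in>{1..j}. a ^ t = 1)}" (is "card ?U \<le> card ?S")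
proof (cases "?U = {}")
  case True then show ?thesis unfolding True by simp
next
  case False
  have fU: "finite ?U" by simp
  have pj: "a ^ j = 1" "a ^ (l + 1 - K) = 1" if "j \<in> ?U" for j
    using that pow_dvd_1[of a "gcd j (l + 1 - K)" j] pow_dvd_1[of a "gcd j (l + 1 - K)" "l + 1 - K"] by auto
  define j0 where "j0 = Min ?U"
  have j0U: "j0 \<in> ?U" using Min_in[OF fU False] by (simp add: j0_def)
  have le: "j0 \<le> j" if "j \<in> ?U" for j using Min_le[OF fU that] by (simp add: j0_def)
  define f where "f j = K - j + j0" for j
  have "inj_on f ?U" unfolding inj_on_def f_def by auto
  moreover have "f ` ?U \<subseteq> ?S"
  proof
    fix x assume "x \<in> f ` ?U"
    then obtain j where jU: "j \<in> ?U" and x: "x = f j" by blast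
    have j0j: "j0 \<le> j" using le[OF jU] .
    have a1: "a ^ (j - j0) = 1" using pow_split[of a j0 j] pj[OF jU] pj[OF j0U] j0j by auto
    have "l + 1 - x = (l + 1 - K) + (j - j0)" using jU j0j assms by (auto simp: x f_def)
    then have "a ^ (l + 1 - x) = 1" using a1 pj[OF jU] by (simp add: power_add)
    moreover have "j0 \<in> {1..x}" "a ^ j0 = 1" using jU j0U j0j pj[OF j0U] by (auto simp: x f_def)
    moreover have "1 \<le> x" "x \<le> K" using jU j0U j0j by (auto simp: x f_def)
    ultimately show "x \<in> ?S" by auto
  qed
  ultimately show ?thesis by (rule card_inj_on_le) simp
qed

lemma comax_mult: assumes "s1 * x + t1 * y = 1" "s2 * x + t2 * z = (1::'a::comm_ring_1)"
  shows "\<exists>s t. s * x + t * (y * z) = 1"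
proof -
  have "1 = (s1 * x + t1 * y) * (s2 * x + t2 * z)" using assms by simp
  also have "\<dots> = (s1 * s2 * x + s1 * t2 * z + t1 * y * s2) * x + (t1 * t2) * (y * z)"
    by (simp add: algebra_simps)
  finally show ?thesis by metis
qed

lemma comax_prod: "finite A \<Longrightarrow> (\<And>j. j \<in> A \<Longrightarrow> \<exists>s t. s * x + t * f j = (1::'a::comm_ring_1))
   \<Longrightarrow> \<exists>s t. s * x + t * prod f A = 1"
proof (induction A rule: finite_induct)
  case empty then show ?case by (intro exI[of _ 0] exI[of _ 1]) simp
next
  case (insert j F)
  obtain s1 t1 where 1: "s1 * x + t1 * prod f F = 1" using insert by blast
  obtain s2 t2 where 2: "s2 * x + t2 * f j = 1" using insert by blast
  obtain s t where "s * x + t * (prod f F * f j) = 1" using comax_mult[OF 1 2] by blast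
  then show ?case using insert(1,2) by (auto simp: mult.commute)
qed

lemma main: "k \<le> l \<Longrightarrow> (\<forall>i\<le>k. G l k dvd h l k i) \<and> (\<exists>c. G l k = (\<Sum>i\<le>k. c i * h l k i))"
proof (induction k)
  case 0
  have G0: "G l 0 = 1" by (simp add: G_def)
  have h0: "h l 0 0 = 1" by (simp add: h_diag qfact_0)
  show ?case by (auto simp: G0 h0 intro!: exI[of _ "\<lambda>_. 1"])
next
  case (Suc k)
  define K where "K = Suc k"
  define n where "n = l - k"
  have n0: "n > 0" using Suc.prems by (simp add: n_def)
  have nK: "l + 1 - K = n" using Suc.prems by (simp add: n_def K_def)
  have K0: "K > 0" by (simp add: K_def)
  have IH: "(\<forall>i\<le>k. G l k dvd h l k i) \<and> (\<exists>c. G l k = (\<Sum>i\<le>k. c i * h l k i))"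
    using Suc.IH Suc.prems by simp
  then have IH1: "\<And>i. i \<le> k \<Longrightarrow> G l k dvd h l k i" by blast
  from IH obtain c where IH2: "G l k = (\<Sum>i\<le>k. c i * h l k i)" by blast
  define G' where "G' = G l k"
  define D' where "D' = D l K"
  define GG where "GG = G l K"
  have GG: "GG = G' * D'" by (simp add: GG_def G'_def D'_def K_def G_Suc)
  have D'def: "D' = gcd (qbr n) (qfact K)" unfolding D'_def D_def nK ..
  have hS: "h l K i = qbr n * h l k i" if "i \<le> k" for i
    using h_Suc[OF that Suc.prems] by (simp add: K_def n_def)
  have GGnz: "GG \<noteq> 0" by (simp add: GG_def G_nz)
  have dvc: "GG dvd qfact K"
  proof (rule zdvd)
    show "is_unit (lead_coeff GG)" unfolding GG_def by (rule lc_G)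
    show "qfact K \<noteq> 0" by (rule qfact_nz)
    fix a
    have "ordc a GG \<le> ordc a (qfact K)"
      unfolding GG_def ordc_G[OF Suc.prems[folded K_def]] ordc_qfact
      by (rule count_c) (use Suc.prems in \<open>simp add: K_def\<close>)
    then show "order a (cp GG) \<le> order a (cp (qfact K))" by (simp add: ordc_def)
  qed
  define B where "B = (\<Prod>j\<in>{1..K}. qbr (gcd j n))"
  have Bnz: "B \<noteq> 0" unfolding B_def by (auto simp: qbr_nz)
  have dvd_d: "B dvd GG"
  proof (rule zdvd)
    show "is_unit (lead_coeff B)" by (simp add: B_def lead_coeff_prod lead_coeff_qbr)
    show "GG \<noteq> 0" by (rule GGnz)
    fix a
    have "ordc a B = (\<Sum>j\<in>{1..K}. ordc a (qbr (gcd j n)))"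
      unfolding B_def by (rule ordc_prod) (auto simp: qbr_nz)
    also have "\<dots> = (\<Sum>j\<in>{1..K}. if a ^ (gcd j n) = 1 then 1 else 0)"
      by (rule sum.cong) (auto simp: ordc_qbr)
    also have "\<dots> = card {j\<in>{1..K}. a ^ (gcd j n) = 1}" by (simp add: sum_if_card)
    also have "\<dots> \<le> ordc a GG"
      unfolding GG_def ordc_G[OF Suc.prems[folded K_def]] nK[symmetric]
      by (rule count_d) (use Suc.prems in \<open>simp add: K_def\<close>)
    finally show "order a (cp B) \<le> order a (cp GG)" by (simp add: ordc_def)
  qed
  obtain P where P: "qbr n = D' * P" using D'def by (metis dvd_def gcd_dvd1)
  obtain Q where Q: "qfact K = GG * Q" using dvc by blast
  obtain X where X: "GG = B * X" using dvd_d by blast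
  define C where "C j = qbr j div qbr (gcd j n)" for j
  have C: "qbr j = qbr (gcd j n) * C j" for j
    unfolding C_def by (rule dvd_mult_div_cancel[symmetric]) (rule qbr_dvd, simp)
  define Pi where "Pi = (\<Prod>j\<in>{1..K}. C j)"
  have "qfact K = B * Pi"
    unfolding qfact_prod B_def Pi_def prod.distrib[symmetric] by (rule prod.cong) (auto simp: C[symmetric])
  then have "B * Pi = B * (X * Q)" using Q X by (metis mult.assoc)
  then have "Pi = X * Q" using Bnz by simp
  then have PiQ: "Pi = Q * X" by (simp only: mult.commute)
  have cmj: "\<exists>s t. s * P + t * C j = 1" if j: "j \<in> {1..K}" for j
  proof -
    define g where "g = qbr (gcd j n)"
    have gnz: "g \<noteq> 0" using j by (simp add: g_def qbr_nz)
    obtain s t where st: "qbr (gcd n j) = s * qbr n + t * qbr j" using qbr_euclid by blast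
    have "g dvd qbr n" unfolding g_def by (rule qbr_dvd) simp
    then obtain An where An: "qbr n = g * An" by blast
    have "g dvd qfact K" unfolding g_def
      by (rule dvd_trans[OF qbr_dvd[of "gcd j n" j] qbr_dvd_qfact]) (use j in auto)
    moreover have "g dvd qbr n" using An by simp
    ultimately have "g dvd D'" by (simp add: D'def)
    then obtain y where y: "D' = g * y" by blast
    have "g * An = g * (y * P)" using An P y by (metis mult.assoc)
    then have Any: "An = y * P" using gnz by simp
    have "g * 1 = g * (s * An + t * C j)"
      using st An C[of j] by (simp add: g_def gcd.commute algebra_simps)
    then have "s * An + t * C j = 1" using gnz by simp
    then have "(s * y) * P + t * C j = 1" by (simp add: Any mult.assoc)
    then show ?thesis by blast
  qed
  obtain s t where st: "s * P + t * Pi = 1"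
    unfolding Pi_def using comax_prod[of "{1..K}" P C] cmj by blast
  have "GG = GG * (s * P + t * Pi)" using st by simp
  also have "\<dots> = s * (P * GG) + (t * X) * (GG * Q)" by (simp add: PiQ algebra_simps)
  also have "P * GG = qbr n * G'" by (simp add: GG P mult_ac)
  also have "GG * Q = qfact K" using Q by simp
  finally have GGeq: "GG = s * (qbr n * G') + (t * X) * qfact K" .
  define c' where "c' i = (if i \<le> k then s * c i else t * X)" for i
  have "qbr n * G' = (\<Sum>i\<le>k. c i * h l K i)"
    unfolding G'_def IH2 sum_distrib_left by (rule sum.cong) (simp_all add: hS mult_ac)
  then have "GG = (\<Sum>i\<le>k. c' i * h l K i) + c' K * h l K K"
    unfolding GGeq by (simp add: c'_def sum_distrib_left h_diag K_def mult.assoc)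
  then have mem: "GG = (\<Sum>i\<le>K. c' i * h l K i)" by (simp add: K_def)
  have dv: "GG dvd h l K i" if "i \<le> K" for i
  proof (cases "i \<le> k")
    case True
    have "G' * D' dvd h l k i * qbr n"
      by (rule mult_dvd_mono) (use IH1[OF True] P in \<open>simp_all add: G'_def\<close>)
    then show ?thesis using True by (simp add: GG hS mult.commute)
  next
    case False
    then have "i = K" using that by (simp add: K_def)
    then show ?thesis using dvc by (simp add: h_diag)
  qed
  show ?case using dv mem unfolding GG_def K_def by blast
qed


theorem proposition4p3:
  fixes l k :: nat
  assumes "k \<le> l"
  shows "laurent_ideal (\<lambda>i. lp (h l k i)) k
         = laurent_ideal (\<lambda>_. lp (Gcd (h l k ` {0..k}))) 0"
proof (rule transfer)
  have M: "(\<forall>i\<le>k. G l k dvd h l k i) \<and> (\<exists>c. G l k = (\<Sum>i\<le>k. c i * h l k i))"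
    using main[OF assms] .
  then obtain c where c: "G l k = (\<Sum>i\<le>k. c i * h l k i)" by blast
  have "G l k dvd Gcd (h l k ` {0..k})" using M by (intro Gcd_greatest) auto
  then obtain w where w: "Gcd (h l k ` {0..k}) = G l k * w" by blast
  have "Gcd (h l k ` {0..k}) = (\<Sum>i\<le>k. (w * c i) * h l k i)"
    unfolding w c sum_distrib_right by (rule sum.cong) (simp_all add: mult_ac)
  then show "\<exists>c. Gcd (h l k ` {0..k}) = (\<Sum>i\<le>k. c i * h l k i)"
    by (intro exI[of _ "\<lambda>i. w * c i"])
  fix i assume "i \<le> k"
  then show "Gcd (h l k ` {0..k}) dvd h l k i" by (intro Gcd_dvd) auto
qed

end
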